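(* Let $\mathbf z=(z_1,z_2,z_3)\in\mathbb{R}^3$ with $z_2>0$ and $z_3>0$, and let $\Lambda^*$ be as defined in the context. Then $$\Lambda^*(\mathbf z)=\ln\pi+\sup_{\lambda_1\neq 0,\ \beta>1}\Big\{\tfrac{z_2}{2}+\tfrac{z_3}{2}+\lambda_1z_1-|\lambda_1|\beta\sqrt{z_2z_3}+\tfrac12\ln(\beta^2-1)+\ln|\lambda_1|-\ln\Big(\pi+2\arctan\Big(\tfrac{\lambda_1}{|\lambda_1|\sqrt{\beta^2-1}}\Big)\Big)\Big\}.$$
   Context: For $\boldsymbol\lambda=(\lambda_1,\lambda_2,\lambda_3)\in\mathbb{R}^3$ let $D=\lambda_1^2-(1-2\lambda_2)(1-2\lambda_3)$, and let $$S=\{\boldsymbol\lambda:\lambda_2<\tfrac12,\ \lambda_3<\tfrac12,\ D<0\}.$$ For $\boldsymbol\lambda\in S$ put $$\Lambda(\boldsymbol\lambda)=\ln\left(\pi+2\arctan\left(\frac{\lambda_1}{\sqrt{-D}}\right)\right)-\ln\pi-\tfrac12\ln(-D).$$ This is the logarithmic moment generating function $\ln\mathbb{E}[\exp(\lambda_1\hat X\hat Y+\lambda_2\hat X^2+\lambda_3\hat Y^2)]$ for independent half-normal $\hat X,\hat Y$. The Fenchel–Legendre transform is $$\Lambda^*(\mathbf z)=\sup_{\boldsymbol\lambda\in S}\{\langle\boldsymbol\lambda,\mathbf z\rangle-\Lambda(\boldsymbol\lambda)\}.$$ *)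

theory Defs
  imports "HOL-Analysis.Analysis"
begin

definition Dlam :: "real \<times> real \<times> real \<Rightarrow> real" where
  "Dlam l = (case l of (l1, l2, l3) \<Rightarrow> l1\<^sup>2 - (1 - 2 * l2) * (1 - 2 * l3))"

definition Sdom :: "(real \<times> real \<times> real) set" where
  "Sdom = {(l1, l2, l3). l2 < 1/2 \<and> l3 < 1/2 \<and> Dlam (l1, l2, l3) < 0}"

definition LogMGF :: "real \<times> real \<times> real \<Rightarrow> real" where
  "LogMGF l = (case l of (l1, l2, l3) \<Rightarrow>
     ln (pi + 2 * arctan (l1 / sqrt (- Dlam l))) - ln pi - (1/2) * ln (- Dlam l))"

definition LegendreT :: "real \<times> real \<times> real \<Rightarrow> ereal" where
  "LegendreT z = (SUP l \<in> Sdom. ereal (fst l * fst z + fst (snd l) * fst (snd z)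
                                     + snd (snd l) * snd (snd z) - LogMGF l))"

end

theory Submission
  imports Defs
begin

lemma LogMGF_eq:
  "LogMGF (l1, l2, l3) = ln (pi + 2 * arctan (l1 / sqrt ((1 - 2*l2) * (1 - 2*l3) - l1\<^sup>2)))
      - ln pi - (1/2) * ln ((1 - 2*l2) * (1 - 2*l3) - l1\<^sup>2)"
  by (simp add: LogMGF_def Dlam_def)

lemma Sdom_iff:
  "(l1, l2, l3) \<in> Sdom \<longleftrightarrow> l2 < 1/2 \<and> l3 < 1/2 \<and> l1\<^sup>2 < (1 - 2*l2) * (1 - 2*l3)"
  by (simp add: Sdom_def Dlam_def)

lemma pi_arctan_pos: "pi + 2 * arctan x > 0"
  using arctan_lbound[of x] by linarith

lemma partA:
  fixes z1 z2 z3 l1 l2 l3 :: real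
  assumes z: "z2 > 0" "z3 > 0"
    and S: "(l1, l2, l3) \<in> Sdom" and l1: "l1 \<noteq> 0"
  shows "\<exists>b>1. l1 * z1 + l2 * z2 + l3 * z3 - LogMGF (l1, l2, l3) \<le>
      ln pi + (z2 / 2 + z3 / 2 + l1 * z1 - \<bar>l1\<bar> * b * sqrt (z2 * z3)
              + (1/2) * ln (b\<^sup>2 - 1) + ln \<bar>l1\<bar>
              - ln (pi + 2 * arctan (l1 / (\<bar>l1\<bar> * sqrt (b\<^sup>2 - 1)))))"
proof -
  define a where "a = 1 - 2*l2"
  define c where "c = 1 - 2*l3"
  have a: "a > 0" and c: "c > 0" and lc: "l1\<^sup>2 < a * c"
    using S by (auto simp: Sdom_iff a_def c_def)
  have ac: "a * c > 0" using a c by simp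
  have l1p: "\<bar>l1\<bar> > 0" using l1 by simp
  define b where "b = sqrt (a*c) / \<bar>l1\<bar>"
  have sq: "sqrt (a*c) > \<bar>l1\<bar>"
    using lc by (metis abs_ge_zero real_sqrt_abs real_sqrt_less_iff)
  have b1: "b > 1" using sq l1p by (simp add: b_def)
  have bb: "b\<^sup>2 - 1 = (a*c - l1\<^sup>2) / l1\<^sup>2"
    using l1p ac by (simp add: b_def power_divide field_simps)
  have pos: "a*c - l1\<^sup>2 > 0" using lc by simp
  have e1: "\<bar>l1\<bar> * sqrt (b\<^sup>2 - 1) = sqrt (a*c - l1\<^sup>2)"
    using l1p by (simp add: bb real_sqrt_divide)
  have e2: "(1/2) * ln (b\<^sup>2 - 1) + ln \<bar>l1\<bar> = (1/2) * ln (a*c - l1\<^sup>2)"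
  proof -
    have "ln (b\<^sup>2 - 1) = ln (a*c - l1\<^sup>2) - ln (l1\<^sup>2)"
      using pos l1 by (simp add: bb ln_div)
    moreover have "ln (l1\<^sup>2) = 2 * ln \<bar>l1\<bar>"
      using l1p by (metis ln_realpow power2_abs of_nat_numeral)
    ultimately show ?thesis by linarith
  qed
  have e3: "\<bar>l1\<bar> * b * sqrt (z2 * z3) = sqrt (a*z2) * sqrt (c*z3)"
    using l1p by (simp add: b_def real_sqrt_mult)
  have amgm: "sqrt (a*z2) * sqrt (c*z3) \<le> (a*z2 + c*z3)/2"
  proof -
    have "0 \<le> (sqrt (a*z2) - sqrt (c*z3))\<^sup>2" by simp
    moreover have "(sqrt (a*z2))\<^sup>2 = a*z2" "(sqrt (c*z3))\<^sup>2 = c*z3" using a c z by auto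
    ultimately show ?thesis by (simp add: power2_diff)
  qed
  have "l1 * z1 + l2 * z2 + l3 * z3 - LogMGF (l1, l2, l3) =
      l1 * z1 + z2/2 + z3/2 - (a*z2 + c*z3)/2
      - ln (pi + 2 * arctan (l1 / sqrt (a*c - l1\<^sup>2))) + ln pi + (1/2) * ln (a*c - l1\<^sup>2)"
    by (simp add: LogMGF_eq a_def c_def field_simps)
  also have "\<dots> \<le> ln pi + (z2 / 2 + z3 / 2 + l1 * z1 - \<bar>l1\<bar> * b * sqrt (z2 * z3)
              + ((1/2) * ln (b\<^sup>2 - 1) + ln \<bar>l1\<bar>)
              - ln (pi + 2 * arctan (l1 / (\<bar>l1\<bar> * sqrt (b\<^sup>2 - 1)))))"
    unfolding e1 e2 e3 using amgm by simp
  finally show ?thesis using b1 by (intro exI[of _ b]) (simp add: algebra_simps)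
qed

lemma partB:
  fixes z1 z2 z3 l1 b :: real
  assumes z: "z2 > 0" "z3 > 0" and l1: "l1 \<noteq> 0" and b1: "b > 1"
  shows "\<exists>l2 l3. (l1, l2, l3) \<in> Sdom \<and>
      ln pi + (z2 / 2 + z3 / 2 + l1 * z1 - \<bar>l1\<bar> * b * sqrt (z2 * z3)
              + (1/2) * ln (b\<^sup>2 - 1) + ln \<bar>l1\<bar>
              - ln (pi + 2 * arctan (l1 / (\<bar>l1\<bar> * sqrt (b\<^sup>2 - 1)))))
      \<le> l1 * z1 + l2 * z2 + l3 * z3 - LogMGF (l1, l2, l3)"
proof -
  have l1p: "\<bar>l1\<bar> > 0" using l1 by simp
  define a where "a = \<bar>l1\<bar> * b * sqrt z3 / sqrt z2"
  define c where "c = \<bar>l1\<bar> * b * sqrt z2 / sqrt z3"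
  have a: "a > 0" and c: "c > 0" using l1p b1 z by (auto simp: a_def c_def)
  have ac: "a * c = l1\<^sup>2 * b\<^sup>2"
    using z by (simp add: a_def c_def power2_eq_square field_simps)
  have b2: "b\<^sup>2 - 1 > 0" using less_1_mult[OF b1 b1] by (simp add: power2_eq_square)
  have d: "a*c - l1\<^sup>2 = l1\<^sup>2 * (b\<^sup>2 - 1)" by (simp add: ac algebra_simps)
  have "l1\<^sup>2 * (b\<^sup>2 - 1) > 0" using b2 l1 by simp
  hence lc: "l1\<^sup>2 < a * c" using d by linarith
  have e1: "sqrt (a*c - l1\<^sup>2) = \<bar>l1\<bar> * sqrt (b\<^sup>2 - 1)"
    by (simp add: d real_sqrt_mult)
  have e2: "(1/2) * ln (a*c - l1\<^sup>2) = (1/2) * ln (b\<^sup>2 - 1) + ln \<bar>l1\<bar>"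
  proof -
    have "ln (a*c - l1\<^sup>2) = ln (l1\<^sup>2) + ln (b\<^sup>2 - 1)"
      using b2 l1 by (simp add: d ln_mult)
    moreover have "ln (l1\<^sup>2) = 2 * ln \<bar>l1\<bar>"
      using l1p by (metis ln_realpow power2_abs of_nat_numeral)
    ultimately show ?thesis by linarith
  qed
  have e3: "(a*z2 + c*z3)/2 = \<bar>l1\<bar> * b * sqrt (z2 * z3)"
  proof -
    have "a*z2 = \<bar>l1\<bar> * b * sqrt z3 * sqrt z2"
      using z by (simp add: a_def field_simps)
    moreover have "c*z3 = \<bar>l1\<bar> * b * sqrt z3 * sqrt z2"
      using z by (simp add: c_def field_simps)
    ultimately show ?thesis by (simp add: real_sqrt_mult)
  qed
  define l2 where "l2 = (1 - a)/2"
  define l3 where "l3 = (1 - c)/2"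
  have al: "a = 1 - 2*l2" "c = 1 - 2*l3" by (simp_all add: l2_def l3_def field_simps)
  have S: "(l1, l2, l3) \<in> Sdom" using a c lc by (simp add: Sdom_iff al[symmetric]) (simp add: l2_def l3_def)
  have "l1 * z1 + l2 * z2 + l3 * z3 - LogMGF (l1, l2, l3) =
      l1 * z1 + z2/2 + z3/2 - (a*z2 + c*z3)/2
      - ln (pi + 2 * arctan (l1 / sqrt (a*c - l1\<^sup>2))) + ln pi + (1/2) * ln (a*c - l1\<^sup>2)"
    by (simp add: LogMGF_eq al field_simps)
  also have "\<dots> = ln pi + (z2 / 2 + z3 / 2 + l1 * z1 - \<bar>l1\<bar> * b * sqrt (z2 * z3)
              + ((1/2) * ln (b\<^sup>2 - 1) + ln \<bar>l1\<bar>)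
              - ln (pi + 2 * arctan (l1 / (\<bar>l1\<bar> * sqrt (b\<^sup>2 - 1)))))"
    unfolding e1 e2 e3 by simp
  finally show ?thesis using S by (intro exI[of _ l2] exI[of _ l3]) (simp add: algebra_simps)
qed


lemma partC:
  fixes z1 z2 z3 l2 l3 :: real and Sup :: ereal
  assumes z: "z2 > 0" "z3 > 0" and S: "(0, l2, l3) \<in> Sdom"
    and up: "\<And>x. x \<noteq> 0 \<Longrightarrow> (x, l2, l3) \<in> Sdom \<Longrightarrow>
               ereal (x * z1 + l2 * z2 + l3 * z3 - LogMGF (x, l2, l3)) \<le> Sup"
  shows "ereal (0 * z1 + l2 * z2 + l3 * z3 - LogMGF (0, l2, l3)) \<le> Sup"
proof -
  define k where "k = (1 - 2*l2) * (1 - 2*l3)"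
  have k: "k > 0" using S by (simp add: Sdom_iff k_def)
  define g where "g x = x * z1 + l2 * z2 + l3 * z3 - (ln (pi + 2 * arctan (x / sqrt (k - x\<^sup>2)))
      - ln pi - (1/2) * ln (k - x\<^sup>2))" for x
  have gL: "g x = x * z1 + l2 * z2 + l3 * z3 - LogMGF (x, l2, l3)" for x
    by (simp add: g_def LogMGF_eq k_def)
  have "isCont g 0"
    unfolding g_def
    using k pi_arctan_pos
    by (intro continuous_intros) (auto simp: pi_arctan_pos)
  hence "(g \<longlongrightarrow> g 0) (at 0)" by (simp add: isCont_def)
  hence lim: "((\<lambda>x. ereal (g x)) \<longlongrightarrow> ereal (g 0)) (at 0)" by (rule tendsto_ereal)
  have ev: "eventually (\<lambda>x. ereal (g x) \<le> Sup) (at (0::real))"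
    unfolding eventually_at
  proof (intro exI[of _ "sqrt k"] conjI ballI impI)
    show "sqrt k > 0" using k by simp
    fix x :: real assume "x \<in> UNIV" and x: "x \<noteq> 0 \<and> dist x 0 < sqrt k"
    hence "\<bar>x\<bar> < sqrt k" by simp
    hence "x\<^sup>2 < k" using k by (metis abs_ge_zero real_sqrt_abs real_sqrt_less_iff)
    hence "(x, l2, l3) \<in> Sdom" using S by (simp add: Sdom_iff k_def)
    thus "ereal (g x) \<le> Sup" using up x by (simp add: gL)
  qed
  have "ereal (g 0) \<le> Sup"
    by (rule tendsto_upperbound[OF lim ev]) simp
  thus ?thesis by (simp add: gL)
qed

theorem lemma8:
  fixes z1 z2 z3 :: real
  assumes "z2 > 0" and "z3 > 0"
  shows "LegendreT (z1, z2, z3) =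
    ereal (ln pi) +
    (SUP p \<in> {(l1, b). l1 \<noteq> (0::real) \<and> b > (1::real)}.
       ereal (z2 / 2 + z3 / 2 + fst p * z1 - \<bar>fst p\<bar> * snd p * sqrt (z2 * z3)
              + (1/2) * ln ((snd p)\<^sup>2 - 1) + ln \<bar>fst p\<bar>
              - ln (pi + 2 * arctan (fst p / (\<bar>fst p\<bar> * sqrt ((snd p)\<^sup>2 - 1))))))"
proof -
  define P where "P = {(l1, b). l1 \<noteq> (0::real) \<and> b > (1::real)}"
  define E where "E p = z2 / 2 + z3 / 2 + fst p * z1 - \<bar>fst p\<bar> * snd p * sqrt (z2 * z3)
              + (1/2) * ln ((snd p)\<^sup>2 - 1) + ln \<bar>fst p\<bar>
              - ln (pi + 2 * arctan (fst p / (\<bar>fst p\<bar> * sqrt ((snd p)\<^sup>2 - 1))))" for p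
  define Sp where "Sp = (SUP p \<in> P. ereal (ln pi + E p))"
  have Pne: "P \<noteq> {}" unfolding P_def by (auto intro!: exI[of _ 1] exI[of _ 2])
  have R: "ereal (ln pi) + (SUP p \<in> P. ereal (E p)) = Sp"
    unfolding Sp_def using SUP_ereal_add_right[OF Pne, of "ereal (ln pi)" "\<lambda>p. ereal (E p)"]
    by simp
  have L: "LegendreT (z1, z2, z3) = (SUP l \<in> Sdom. ereal (fst l * z1 + fst (snd l) * z2
                                     + snd (snd l) * z3 - LogMGF l))"
    by (simp add: LegendreT_def)
  have A: "ereal (l1 * z1 + l2 * z2 + l3 * z3 - LogMGF (l1, l2, l3)) \<le> Sp"
    if nz: "l1 \<noteq> 0" and inS: "(l1, l2, l3) \<in> Sdom" for l1 l2 l3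
  proof -
    obtain b where b: "b > 1" and le: "l1 * z1 + l2 * z2 + l3 * z3 - LogMGF (l1, l2, l3) \<le>
      ln pi + (z2 / 2 + z3 / 2 + l1 * z1 - \<bar>l1\<bar> * b * sqrt (z2 * z3)
              + (1/2) * ln (b\<^sup>2 - 1) + ln \<bar>l1\<bar>
              - ln (pi + 2 * arctan (l1 / (\<bar>l1\<bar> * sqrt (b\<^sup>2 - 1)))))"
      using partA[OF assms inS nz] by blast
    have "(l1, b) \<in> P" using b nz by (simp add: P_def)
    moreover have "l1 * z1 + l2 * z2 + l3 * z3 - LogMGF (l1, l2, l3) \<le> ln pi + E (l1, b)"
      using le by (simp add: E_def)
    ultimately show ?thesis unfolding Sp_def by (intro SUP_upper2[of "(l1, b)"]) auto
  qed
  have "LegendreT (z1, z2, z3) \<le> Sp"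
    unfolding L
  proof (rule SUP_least)
    fix l assume l: "l \<in> Sdom"
    obtain l1 l2 l3 where lq: "l = (l1, l2, l3)" by (cases l)
    show "ereal (fst l * z1 + fst (snd l) * z2 + snd (snd l) * z3 - LogMGF l) \<le> Sp"
    proof (cases "l1 = 0")
      case True
      show ?thesis using partC[where ?l2.0=l2 and ?l3.0=l3 and Sup=Sp and ?z1.0=z1 and ?z2.0=z2 and ?z3.0=z3, OF assms] A l lq True by auto
    next
      case False
      thus ?thesis using A[OF False] l lq by auto
    qed
  qed
  moreover have "Sp \<le> LegendreT (z1, z2, z3)"
    unfolding L Sp_def
  proof (rule SUP_least)
    fix p assume p: "p \<in> P"
    obtain l1 b where pq: "p = (l1, b)" by (cases p)
    have l1: "l1 \<noteq> 0" and b: "b > 1" using p pq by (auto simp: P_def)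
    obtain l2 l3 where S: "(l1, l2, l3) \<in> Sdom" and le:
      "ln pi + (z2 / 2 + z3 / 2 + l1 * z1 - \<bar>l1\<bar> * b * sqrt (z2 * z3)
              + (1/2) * ln (b\<^sup>2 - 1) + ln \<bar>l1\<bar>
              - ln (pi + 2 * arctan (l1 / (\<bar>l1\<bar> * sqrt (b\<^sup>2 - 1)))))
      \<le> l1 * z1 + l2 * z2 + l3 * z3 - LogMGF (l1, l2, l3)"
      using partB[OF assms l1 b, of z1] by blast
    show "ereal (ln pi + E p) \<le> (SUP l \<in> Sdom. ereal (fst l * z1 + fst (snd l) * z2
                                     + snd (snd l) * z3 - LogMGF l))"
      using le S by (intro SUP_upper2[of "(l1, l2, l3)"]) (auto simp: pq E_def)
  qed
  ultimately have "LegendreT (z1, z2, z3) = Sp" by (rule antisym)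
  thus ?thesis using R by (simp add: P_def E_def)
qed

end
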